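(* Let $(V,\nu)$ and $(W,\omega)$ be matrix gauge spaces with $\mathbb{C}$-proper matrix gauges, and let $(V,V_{ac},h)$ and $(W,W_{ac},h')$ be the induced triples, i.e. $V_{ac}^n=\{x:\nu_n(-x)=0\}$, $h_n(x)=\max\{\nu_n(x),\nu_n(-x)\}$, and similarly for $W$ with $\omega$. Let $\phi:V\to W$ be linear. (i) If $\phi$ is completely gauge contractive (i.e. $\omega_n(\phi^{(n)}(x))\le\nu_n(x)$ for all $n$ and $x\in M_n(V)$), then $\phi$ is real-cpcc. (ii) If $\phi$ is real-cpcc, then $\omega_n(\phi^{(n)}(x))\le\nu_{max}^n(x)$ for all $n$ and $x\in M_n(V)$, where $\nu_{max}^n(x)=\inf\{h_n(x+p):p\in V_{ac}^n\}$.
   Context: For a complex vector space $V$, $M_n(V)$ is the $n\times n$ matrices over $V$ and $\phi^{(n)}$ is the entrywise application of a linear map $\phi$. A matrix gauge is a sequence $\{\nu_n:M_n(V)\to[0,\infty)\}$ with $\nu_n(x+y)\le\nu_n(x)+\nu_n(y)$, $\nu_n(tx)=t\nu_n(x)$ ($t\ge0$), $\nu_k(X^*AX)\le\|X\|^2\nu_n(A)$ for scalar $X\in M_{n,k}$, and $\nu_{n+m}(A\oplus B)=\max\{\nu_n(A),\nu_m(B)\}$; it is $\mathbb{C}$-proper if $\nu_1(i^kz)=0$ for $k=0,1,2,3$ implies $z=0$. A linear map $\phi:V\to W$ is real-completely positive if $\phi^{(n)}(V_{ac}^n)\subseteq W_{ac}^n$ for all $n$, real-completely contractive if $h'_n(\phi^{(n)}(x))\le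 h_n(x)$ for all $n,x$, and real-cpcc if it is both. *)

theory Defs
  imports "HOL-Analysis.Analysis"
begin

class scaleC =
  fixes scaleC :: "complex \<Rightarrow> 'a \<Rightarrow> 'a" (infixr "*\<^sub>C" 75)

class complex_vector = scaleC + ab_group_add +
  assumes scaleC_add_right: "a *\<^sub>C (x + y) = a *\<^sub>C x + a *\<^sub>C y"
    and scaleC_add_left: "(a + b) *\<^sub>C x = a *\<^sub>C x + b *\<^sub>C x"
    and scaleC_scaleC: "a *\<^sub>C (b *\<^sub>C x) = (a * b) *\<^sub>C x"
    and scaleC_one: "1 *\<^sub>C x = x"

definition clinear_map :: "('v::complex_vector \<Rightarrow> 'w::complex_vector) \<Rightarrow> bool" where
  "clinear_map f \<longleftrightarrow> (\<forall>x y. f (x + y) = f x + f y) \<and> (\<forall>a x. f (a *\<^sub>C x) = a *\<^sub>C f x)"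

definition mats :: "nat \<Rightarrow> nat \<Rightarrow> (nat \<Rightarrow> nat \<Rightarrow> 'a::zero) set" where
  "mats n m = {A. \<forall>i j. (n \<le> i \<or> m \<le> j) \<longrightarrow> A i j = 0}"

abbreviation sqmats :: "nat \<Rightarrow> (nat \<Rightarrow> nat \<Rightarrow> 'a::zero) set" where
  "sqmats n \<equiv> mats n n"

definition ampl :: "('v \<Rightarrow> 'w) \<Rightarrow> (nat \<Rightarrow> nat \<Rightarrow> 'v) \<Rightarrow> (nat \<Rightarrow> nat \<Rightarrow> 'w)" where
  "ampl f A = (\<lambda>i j. f (A i j))"

text \<open>X^* A X for a scalar n x k matrix X and A in M_n(V); result is k x k.\<close>
definition cong_mat :: "nat \<Rightarrow> nat \<Rightarrow> (nat \<Rightarrow> nat \<Rightarrow> complex) \<Rightarrow> (nat \<Rightarrow> nat \<Rightarrow> 'v::complex_vector)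
    \<Rightarrow> (nat \<Rightarrow> nat \<Rightarrow> 'v)" where
  "cong_mat n k X A = (\<lambda>i j. if i < k \<and> j < k then
       (\<Sum>p<n. \<Sum>q<n. (cnj (X p i) * X q j) *\<^sub>C A p q) else 0)"

definition vnorm :: "nat \<Rightarrow> (nat \<Rightarrow> complex) \<Rightarrow> real" where
  "vnorm k v = sqrt (\<Sum>i<k. (cmod (v i))\<^sup>2)"

definition opnorm :: "nat \<Rightarrow> nat \<Rightarrow> (nat \<Rightarrow> nat \<Rightarrow> complex) \<Rightarrow> real" where
  "opnorm n k X = Sup {vnorm n (\<lambda>i. \<Sum>j<k. X i j * v j) | v. vnorm k v \<le> 1}"

definition dsum :: "nat \<Rightarrow> nat \<Rightarrow> (nat \<Rightarrow> nat \<Rightarrow> 'a::zero) \<Rightarrow> (nat \<Rightarrow> nat \<Rightarrow> 'a) \<Rightarrow> (nat \<Rightarrow> nat \<Rightarrow> 'a)" where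
  "dsum n m A B = (\<lambda>i j. if i < n \<and> j < n then A i j
      else if n \<le> i \<and> i < n + m \<and> n \<le> j \<and> j < n + m then B (i - n) (j - n) else 0)"

definition mat1 :: "'a::zero \<Rightarrow> (nat \<Rightarrow> nat \<Rightarrow> 'a)" where
  "mat1 z = (\<lambda>i j. if i = 0 \<and> j = 0 then z else 0)"

definition matrix_gauge :: "(nat \<Rightarrow> (nat \<Rightarrow> nat \<Rightarrow> 'v::complex_vector) \<Rightarrow> real) \<Rightarrow> bool" where
  "matrix_gauge \<nu> \<longleftrightarrow>
     (\<forall>n\<ge>1. \<forall>x\<in>sqmats n. 0 \<le> \<nu> n x) \<and>
     (\<forall>n\<ge>1. \<forall>x\<in>sqmats n. \<forall>y\<in>sqmats n. \<nu> n (\<lambda>i j. x i j + y i j) \<le> \<nu> n x + \<nu> n y) \<and>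
     (\<forall>n\<ge>1. \<forall>x\<in>sqmats n. \<forall>t::real. 0 \<le> t \<longrightarrow>
         \<nu> n (\<lambda>i j. complex_of_real t *\<^sub>C x i j) = t * \<nu> n x) \<and>
     (\<forall>n\<ge>1. \<forall>k\<ge>1. \<forall>X\<in>mats n k. \<forall>A\<in>sqmats n.
         \<nu> k (cong_mat n k X A) \<le> (opnorm n k X)\<^sup>2 * \<nu> n A) \<and>
     (\<forall>n\<ge>1. \<forall>m\<ge>1. \<forall>A\<in>sqmats n. \<forall>B\<in>sqmats m.
         \<nu> (n + m) (dsum n m A B) = max (\<nu> n A) (\<nu> m B))"

definition C_proper :: "(nat \<Rightarrow> (nat \<Rightarrow> nat \<Rightarrow> 'v::complex_vector) \<Rightarrow> real) \<Rightarrow> bool" where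
  "C_proper \<nu> \<longleftrightarrow> (\<forall>z. (\<forall>k::nat\<in>{0,1,2,3}. \<nu> 1 (mat1 ((\<i> ^ k) *\<^sub>C z)) = 0) \<longrightarrow> z = 0)"

definition acone :: "(nat \<Rightarrow> (nat \<Rightarrow> nat \<Rightarrow> 'v::complex_vector) \<Rightarrow> real) \<Rightarrow> nat \<Rightarrow> (nat \<Rightarrow> nat \<Rightarrow> 'v) set" where
  "acone \<nu> n = {x\<in>sqmats n. \<nu> n (\<lambda>i j. - x i j) = 0}"

definition hnorm :: "(nat \<Rightarrow> (nat \<Rightarrow> nat \<Rightarrow> 'v::complex_vector) \<Rightarrow> real) \<Rightarrow> nat \<Rightarrow> (nat \<Rightarrow> nat \<Rightarrow> 'v) \<Rightarrow> real" where
  "hnorm \<nu> n x = max (\<nu> n x) (\<nu> n (\<lambda>i j. - x i j))"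

definition nu_max :: "(nat \<Rightarrow> (nat \<Rightarrow> nat \<Rightarrow> 'v::complex_vector) \<Rightarrow> real) \<Rightarrow> nat \<Rightarrow> (nat \<Rightarrow> nat \<Rightarrow> 'v) \<Rightarrow> real" where
  "nu_max \<nu> n x = Inf {hnorm \<nu> n (\<lambda>i j. x i j + p i j) | p. p \<in> acone \<nu> n}"

definition completely_gauge_contractive ::
  "(nat \<Rightarrow> (nat \<Rightarrow> nat \<Rightarrow> 'v::complex_vector) \<Rightarrow> real) \<Rightarrow> (nat \<Rightarrow> (nat \<Rightarrow> nat \<Rightarrow> 'w::complex_vector) \<Rightarrow> real)
     \<Rightarrow> ('v \<Rightarrow> 'w) \<Rightarrow> bool" where
  "completely_gauge_contractive \<nu> \<omega> \<phi> \<longleftrightarrow>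
     (\<forall>n\<ge>1. \<forall>x\<in>sqmats n. \<omega> n (ampl \<phi> x) \<le> \<nu> n x)"

definition real_cp ::
  "(nat \<Rightarrow> (nat \<Rightarrow> nat \<Rightarrow> 'v::complex_vector) \<Rightarrow> real) \<Rightarrow> (nat \<Rightarrow> (nat \<Rightarrow> nat \<Rightarrow> 'w::complex_vector) \<Rightarrow> real)
     \<Rightarrow> ('v \<Rightarrow> 'w) \<Rightarrow> bool" where
  "real_cp \<nu> \<omega> \<phi> \<longleftrightarrow> (\<forall>n\<ge>1. ampl \<phi> ` acone \<nu> n \<subseteq> acone \<omega> n)"

definition real_cc ::
  "(nat \<Rightarrow> (nat \<Rightarrow> nat \<Rightarrow> 'v::complex_vector) \<Rightarrow> real) \<Rightarrow> (nat \<Rightarrow> (nat \<Rightarrow> nat \<Rightarrow> 'w::complex_vector) \<Rightarrow> real)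
     \<Rightarrow> ('v \<Rightarrow> 'w) \<Rightarrow> bool" where
  "real_cc \<nu> \<omega> \<phi> \<longleftrightarrow> (\<forall>n\<ge>1. \<forall>x\<in>sqmats n. hnorm \<omega> n (ampl \<phi> x) \<le> hnorm \<nu> n x)"

definition real_cpcc ::
  "(nat \<Rightarrow> (nat \<Rightarrow> nat \<Rightarrow> 'v::complex_vector) \<Rightarrow> real) \<Rightarrow> (nat \<Rightarrow> (nat \<Rightarrow> nat \<Rightarrow> 'w::complex_vector) \<Rightarrow> real)
     \<Rightarrow> ('v \<Rightarrow> 'w) \<Rightarrow> bool" where
  "real_cpcc \<nu> \<omega> \<phi> \<longleftrightarrow> real_cp \<nu> \<omega> \<phi> \<and> real_cc \<nu> \<omega> \<phi>"

end

theory Submission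
  imports Defs
begin

lemma lin0: "clinear_map f \<Longrightarrow> f 0 = 0"
proof -
  assume "clinear_map f"
  hence "f (0 + 0) = f 0 + f 0" unfolding clinear_map_def by blast
  thus ?thesis by simp
qed

lemma linneg: "clinear_map f \<Longrightarrow> f (- a) = - f a"
proof -
  assume a: "clinear_map f"
  hence "f (a + - a) = f a + f (- a)" unfolding clinear_map_def by blast
  hence "0 = f a + f (- a)" using lin0[OF a] by simp
  thus ?thesis by (simp add: eq_neg_iff_add_eq_0 add.commute)
qed

lemma linadd: "clinear_map f \<Longrightarrow> f (a + b) = f a + f b"
  unfolding clinear_map_def by blast

lemma ampl_mats: "clinear_map f \<Longrightarrow> x \<in> sqmats n \<Longrightarrow> ampl f x \<in> sqmats n"
  using lin0[of f] unfolding mats_def ampl_def by auto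

lemma neg_mats: "(x::nat\<Rightarrow>nat\<Rightarrow>'a::ab_group_add) \<in> mats n m \<Longrightarrow> (\<lambda>i j. - x i j) \<in> mats n m"
  unfolding mats_def by auto

lemma add_mats: "(x::nat\<Rightarrow>nat\<Rightarrow>'a::ab_group_add) \<in> mats n m \<Longrightarrow> y \<in> mats n m \<Longrightarrow> (\<lambda>i j. x i j + y i j) \<in> mats n m"
  unfolding mats_def by auto

lemma zero_mats: "(\<lambda>i j. 0) \<in> mats n m"
  unfolding mats_def by auto

lemma ampl_neg: "clinear_map f \<Longrightarrow> ampl f (\<lambda>i j. - x i j) = (\<lambda>i j. - ampl f x i j)"
proof -
  assume a: "clinear_map f"
  show ?thesis unfolding ampl_def by (intro ext) (rule linneg[OF a])
qed

lemma scaleC_zero: "(0::complex) *\<^sub>C (x::'a::complex_vector) = 0"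
proof -
  have "(0 + 0::complex) *\<^sub>C x = 0 *\<^sub>C x + 0 *\<^sub>C x" by (rule scaleC_add_left)
  hence "0 *\<^sub>C x = 0 *\<^sub>C x + 0 *\<^sub>C x" by (simp only: add_0)
  hence "0 *\<^sub>C x + 0 = 0 *\<^sub>C x + 0 *\<^sub>C x" by (simp only: add_0_right)
  hence "0 = 0 *\<^sub>C x" by (rule add_left_imp_eq)
  thus ?thesis by (rule sym)
qed

lemma mg_pos: assumes "matrix_gauge \<nu>" "n \<ge> 1" "x \<in> sqmats n" shows "0 \<le> \<nu> n x"
proof -
  have "\<forall>n\<ge>1. \<forall>x\<in>sqmats n. 0 \<le> \<nu> n x" using assms(1) unfolding matrix_gauge_def by (rule conjunct1)
  thus ?thesis using assms(2,3) by blast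
qed

lemma mg_sub: assumes "matrix_gauge \<nu>" "n \<ge> 1" "x \<in> sqmats n" "y \<in> sqmats n"
  shows "\<nu> n (\<lambda>i j. x i j + y i j) \<le> \<nu> n x + \<nu> n y"
proof -
  have "\<forall>n\<ge>1. \<forall>x\<in>sqmats n. \<forall>y\<in>sqmats n. \<nu> n (\<lambda>i j. x i j + y i j) \<le> \<nu> n x + \<nu> n y"
    using assms(1) unfolding matrix_gauge_def by (rule conjunct1[OF conjunct2])
  thus ?thesis using assms(2,3,4) by blast
qed

lemma mg_hom: assumes "matrix_gauge \<nu>" "n \<ge> 1" "x \<in> sqmats n" "0 \<le> t"
  shows "\<nu> n (\<lambda>i j. complex_of_real t *\<^sub>C x i j) = t * \<nu> n x"
proof -
  have "\<forall>n\<ge>1. \<forall>x\<in>sqmats n. \<forall>t::real. 0 \<le> t \<longrightarrow>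
         \<nu> n (\<lambda>i j. complex_of_real t *\<^sub>C x i j) = t * \<nu> n x"
    using assms(1) unfolding matrix_gauge_def by (rule conjunct1[OF conjunct2[OF conjunct2]])
  thus ?thesis using assms(2,3,4) by blast
qed

lemma gauge_zero:
  assumes "matrix_gauge \<nu>" "n \<ge> 1"
  shows "\<nu> n (\<lambda>i j. (0::'a::complex_vector)) = 0"
proof -
  have "\<nu> n (\<lambda>i j. complex_of_real 0 *\<^sub>C (0::'a)) = 0 * \<nu> n (\<lambda>i j. 0)"
    by (rule mg_hom[OF assms zero_mats]) simp
  thus ?thesis by (simp add: scaleC_zero)
qed

lemma partA:
  fixes \<nu> :: "nat \<Rightarrow> (nat \<Rightarrow> nat \<Rightarrow> 'v::complex_vector) \<Rightarrow> real"
    and \<omega> :: "nat \<Rightarrow> (nat \<Rightarrow> nat \<Rightarrow> 'w::complex_vector) \<Rightarrow> real"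
    and \<phi> :: "'v \<Rightarrow> 'w"
  assumes "matrix_gauge \<nu>" and "C_proper \<nu>"
    and "matrix_gauge \<omega>" and "C_proper \<omega>"
    and "clinear_map \<phi>"
  shows "completely_gauge_contractive \<nu> \<omega> \<phi> \<longrightarrow> real_cpcc \<nu> \<omega> \<phi>"
proof
  have wpos: "\<And>n x. n \<ge> 1 \<Longrightarrow> x \<in> sqmats n \<Longrightarrow> 0 \<le> \<omega> n x"
    by (rule mg_pos[OF assms(3)])
  have wsub: "\<And>n x y. n \<ge> 1 \<Longrightarrow> x \<in> sqmats n \<Longrightarrow> y \<in> sqmats n \<Longrightarrow>
      \<omega> n (\<lambda>i j. x i j + y i j) \<le> \<omega> n x + \<omega> n y"
    by (rule mg_sub[OF assms(3)])
    assume c: "completely_gauge_contractive \<nu> \<omega> \<phi>"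
    have cc: "\<And>n x. n \<ge> 1 \<Longrightarrow> x \<in> sqmats n \<Longrightarrow> \<omega> n (ampl \<phi> x) \<le> \<nu> n x"
      using c unfolding completely_gauge_contractive_def by blast
    have "real_cp \<nu> \<omega> \<phi>"
      unfolding real_cp_def
    proof (intro allI impI subsetI)
      fix n y assume n: "n \<ge> 1" and "y \<in> ampl \<phi> ` acone \<nu> n"
      then obtain x where x: "x \<in> acone \<nu> n" and y: "y = ampl \<phi> x" by blast
      have xm: "x \<in> sqmats n" and x0: "\<nu> n (\<lambda>i j. - x i j) = 0" using x unfolding acone_def by auto
      have "\<omega> n (\<lambda>i j. - y i j) = \<omega> n (ampl \<phi> (\<lambda>i j. - x i j))"
        using y ampl_neg[OF assms(5)] by simp
      also have "\<dots> \<le> 0" using cc[OF n neg_mats[OF xm]] x0 by simp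
      finally have "\<omega> n (\<lambda>i j. - y i j) = 0"
        using wpos[OF n neg_mats[OF ampl_mats[OF assms(5) xm]]] y by simp
      thus "y \<in> acone \<omega> n" unfolding acone_def using y ampl_mats[OF assms(5) xm] by simp
    qed
    moreover have "real_cc \<nu> \<omega> \<phi>"
      unfolding real_cc_def hnorm_def
    proof (intro allI impI ballI)
      fix n x assume n: "n \<ge> 1" and xm: "(x::nat\<Rightarrow>nat\<Rightarrow>'v) \<in> sqmats (n::nat)"
      show "max (\<omega> n (ampl \<phi> x)) (\<omega> n (\<lambda>i j. - ampl \<phi> x i j)) \<le> max (\<nu> n x) (\<nu> n (\<lambda>i j. - x i j))"
      proof (rule max.mono)
        show "\<omega> n (ampl \<phi> x) \<le> \<nu> n x" using cc[OF n xm] .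
        have "\<omega> n (ampl \<phi> (\<lambda>i j. - x i j)) \<le> \<nu> n (\<lambda>i j. - x i j)" using cc[OF n neg_mats[OF xm]] .
        thus "\<omega> n (\<lambda>i j. - ampl \<phi> x i j) \<le> \<nu> n (\<lambda>i j. - x i j)" by (simp only: ampl_neg[OF assms(5)])
      qed
    qed
    ultimately show "real_cpcc \<nu> \<omega> \<phi>" unfolding real_cpcc_def by blast
qed

lemma partB:
  fixes \<nu> :: "nat \<Rightarrow> (nat \<Rightarrow> nat \<Rightarrow> 'v::complex_vector) \<Rightarrow> real"
    and \<omega> :: "nat \<Rightarrow> (nat \<Rightarrow> nat \<Rightarrow> 'w::complex_vector) \<Rightarrow> real"
    and \<phi> :: "'v \<Rightarrow> 'w"
  assumes "matrix_gauge \<nu>" and "C_proper \<nu>"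
    and "matrix_gauge \<omega>" and "C_proper \<omega>"
    and "clinear_map \<phi>"
  shows "real_cpcc \<nu> \<omega> \<phi> \<longrightarrow> (\<forall>n\<ge>1. \<forall>x\<in>sqmats n. \<omega> n (ampl \<phi> x) \<le> nu_max \<nu> n x)"
proof
  have wpos: "\<And>n x. n \<ge> 1 \<Longrightarrow> x \<in> sqmats n \<Longrightarrow> 0 \<le> \<omega> n x"
    by (rule mg_pos[OF assms(3)])
  have wsub: "\<And>n x y. n \<ge> 1 \<Longrightarrow> x \<in> sqmats n \<Longrightarrow> y \<in> sqmats n \<Longrightarrow>
      \<omega> n (\<lambda>i j. x i j + y i j) \<le> \<omega> n x + \<omega> n y"
    by (rule mg_sub[OF assms(3)])
    assume r: "real_cpcc \<nu> \<omega> \<phi>"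
    have cp: "\<And>n p. n \<ge> 1 \<Longrightarrow> p \<in> acone \<nu> n \<Longrightarrow> ampl \<phi> p \<in> acone \<omega> n"
      using r unfolding real_cpcc_def real_cp_def by blast
    have cc: "\<And>n x. n \<ge> 1 \<Longrightarrow> x \<in> sqmats n \<Longrightarrow> hnorm \<omega> n (ampl \<phi> x) \<le> hnorm \<nu> n x"
      using r unfolding real_cpcc_def real_cc_def by blast
    show "\<forall>n\<ge>1. \<forall>x\<in>sqmats n. \<omega> n (ampl \<phi> x) \<le> nu_max \<nu> n x"
    proof (intro allI impI ballI)
      fix n x assume n: "n \<ge> (1::nat)" and xm: "(x::nat\<Rightarrow>nat\<Rightarrow>'v) \<in> sqmats n"
      have z: "(\<lambda>i j. 0) \<in> acone \<nu> n"
        unfolding acone_def using zero_mats gauge_zero[OF assms(1) n] by simp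
      show "\<omega> n (ampl \<phi> x) \<le> nu_max \<nu> n x"
        unfolding nu_max_def
      proof (rule cInf_greatest)
        show "{hnorm \<nu> n (\<lambda>i j. x i j + p i j) |p. p \<in> acone \<nu> n} \<noteq> {}" using z by blast
      next
        fix h assume "h \<in> {hnorm \<nu> n (\<lambda>i j. x i j + p i j) |p. p \<in> acone \<nu> n}"
        then obtain p where p: "p \<in> acone \<nu> n" and h: "h = hnorm \<nu> n (\<lambda>i j. x i j + p i j)" by blast
        have pm: "p \<in> sqmats n" using p unfolding acone_def by auto
        have xp: "(\<lambda>i j. x i j + p i j) \<in> sqmats n" using add_mats[OF xm pm] .
        have A: "ampl \<phi> (\<lambda>i j. x i j + p i j) \<in> sqmats n" using ampl_mats[OF assms(5) xp] .
        have B: "(\<lambda>i j. - ampl \<phi> p i j) \<in> sqmats n" using neg_mats[OF ampl_mats[OF assms(5) pm]] .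
        have eq: "ampl \<phi> x = (\<lambda>i j. ampl \<phi> (\<lambda>i j. x i j + p i j) i j + (- ampl \<phi> p i j))"
          unfolding ampl_def by (intro ext) (simp add: linadd[OF assms(5)])
        have p0: "\<omega> n (\<lambda>i j. - ampl \<phi> p i j) = 0" using cp[OF n p] unfolding acone_def by auto
        have "\<omega> n (ampl \<phi> x) \<le> \<omega> n (ampl \<phi> (\<lambda>i j. x i j + p i j)) + \<omega> n (\<lambda>i j. - ampl \<phi> p i j)"
          using wsub[OF n A B] eq by (simp only:)
        also have "\<dots> \<le> hnorm \<omega> n (ampl \<phi> (\<lambda>i j. x i j + p i j))" using p0 unfolding hnorm_def by simp
        also have "\<dots> \<le> h" using cc[OF n xp] h by simp
        finally show "\<omega> n (ampl \<phi> x) \<le> h" .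
      qed
    qed
qed

theorem proposition6p1:
  fixes \<nu> :: "nat \<Rightarrow> (nat \<Rightarrow> nat \<Rightarrow> 'v::complex_vector) \<Rightarrow> real"
    and \<omega> :: "nat \<Rightarrow> (nat \<Rightarrow> nat \<Rightarrow> 'w::complex_vector) \<Rightarrow> real"
    and \<phi> :: "'v \<Rightarrow> 'w"
  assumes "matrix_gauge \<nu>" and "C_proper \<nu>"
    and "matrix_gauge \<omega>" and "C_proper \<omega>"
    and "clinear_map \<phi>"
  shows "(completely_gauge_contractive \<nu> \<omega> \<phi> \<longrightarrow> real_cpcc \<nu> \<omega> \<phi>) \<and>
         (real_cpcc \<nu> \<omega> \<phi> \<longrightarrow>
            (\<forall>n\<ge>1. \<forall>x\<in>sqmats n. \<omega> n (ampl \<phi> x) \<le> nu_max \<nu> n x))"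
  using partA[OF assms] partB[OF assms] by blast

end
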